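(* Let $\mathcal A=\{\ell_1,\dots,\ell_n\}$ be an arrangement of affine lines in $\mathbb C^2$ whose graph of double points $\Gamma$ is connected. Then the projectivization $\overline{\mathcal A}$ of the cone $c\mathcal A$ does not support any multinet structure, i.e. for no multiplicity function $m:\overline{\mathcal A}\to\mathbb Z_{>0}$ is there a multinet on $(\overline{\mathcal A},m)$.
   Context: The graph of double points $\Gamma$ of $\mathcal A$ has vertex set $\mathcal A$, with an edge $\{\ell_i,\ell_j\}$ iff $\ell_i\cap\ell_j$ is a point lying on no other line of $\mathcal A$. The cone $c\mathcal A$ is the central arrangement of $n+1$ planes in $\mathbb C^3$ consisting of the coordinate plane $z_0=0$ and the zero sets of the homogenizations (with respect to $z_0$) of the defining linear polynomials of the $\ell_i$. Its projectivization $\overline{\mathcal A}$ is the arrangement of $n+1$ lines in $\mathbb P^2$ (the projective closures of the $\ell_i$ and the line at infinity). A multinet on a multiarrangement $(\overline{\mathcal A},m)$ (Falk–Yuzvinsky) consists of a partition of $\overline{\mathcal A}$ into $k\ge 3$ nonempty classes $\overline{\mathcal A}_1,\dots,\overline{\mathcal A}_k$ and a set $\mathcal X$ of points of $\mathbb P^2$ such that: (i) $\sum_{\ell\in\overline{\mathcal A}_i}m(\ell)$ is independent of $i$; (ii) if $\ell\in\overline{\mathcal A}_i$, $\ell'\in\overline{\mathcal A}_j$ with $i\ne j$, then $\ell\cap\ell'\in\mathcal X$; (iii) for each $p\in\mathcal X$, $\sum_{\ell\in\overline{\mathcal A}_i,\,p\in\ell}m(\ell)$ is independent of $i$; (iv)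 for each $i$ and any $\ell,\ell'\in\overline{\mathcal A}_i$ there is a sequence $\ell=\ell_0,\ell_1,\dots,\ell_r=\ell'$ in $\overline{\mathcal A}_i$ with $\ell_{s-1}\cap\ell_s\notin\mathcal X$ for all $s$. *)

theory Defs
  imports Main "HOL.Complex"
begin

type_synonym cpt2 = "complex \<times> complex"

definition aff_coeffs_ok :: "complex \<times> complex \<times> complex \<Rightarrow> bool" where
  "aff_coeffs_ok f = (case f of (a, b, c) \<Rightarrow> (a, b) \<noteq> (0, 0))"

definition aff_line :: "complex \<times> complex \<times> complex \<Rightarrow> cpt2 set" where
  "aff_line f = (case f of (a, b, c) \<Rightarrow> {(x, y). a * x + b * y + c = 0})"

definition is_aff_line :: "cpt2 set \<Rightarrow> bool" where
  "is_aff_line L = (\<exists>f. aff_coeffs_ok f \<and> L = aff_line f)"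

definition dp_edge :: "cpt2 set set \<Rightarrow> cpt2 set \<Rightarrow> cpt2 set \<Rightarrow> bool" where
  "dp_edge A L L' = (L \<in> A \<and> L' \<in> A \<and> L \<noteq> L' \<and>
     (\<exists>q. L \<inter> L' = {q} \<and> (\<forall>M \<in> A - {L, L'}. q \<notin> M)))"

definition dp_graph_connected :: "cpt2 set set \<Rightarrow> bool" where
  "dp_graph_connected A = (\<forall>L \<in> A. \<forall>L' \<in> A. (dp_edge A)\<^sup>*\<^sup>* L L')"

type_synonym cvec3 = "complex \<times> complex \<times> complex"

definition smul3 :: "complex \<Rightarrow> cvec3 \<Rightarrow> cvec3" where
  "smul3 t v = (case v of (a, b, c) \<Rightarrow> (t * a, t * b, t * c))"

text \<open>A point of P^2 is the set of nonzero representatives of a line through 0 in C^3.\<close>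
definition ppoint :: "cvec3 \<Rightarrow> cvec3 set" where
  "ppoint v = {smul3 t v | t. t \<noteq> 0}"

definition proj_points :: "cvec3 set set" where
  "proj_points = {ppoint v | v. v \<noteq> (0, 0, 0)}"

definition pline :: "cvec3 \<Rightarrow> cvec3 set set" where
  "pline h = {P \<in> proj_points. \<forall>z \<in> P. (case h of (a0, a1, a2) \<Rightarrow> case z of (z0, z1, z2) \<Rightarrow>
              a0 * z0 + a1 * z1 + a2 * z2 = 0)}"

text \<open>Homogenization w.r.t. z0 of a*x + b*y + c (with x = z1, y = z2): c*z0 + a*z1 + b*z2.\<close>
definition homog :: "complex \<times> complex \<times> complex \<Rightarrow> cvec3" where
  "homog f = (case f of (a, b, c) \<Rightarrow> (c, a, b))"

definition proj_closure :: "cpt2 set \<Rightarrow> cvec3 set set" where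
  "proj_closure L = pline (homog (SOME f. aff_coeffs_ok f \<and> L = aff_line f))"

definition line_infinity :: "cvec3 set set" where
  "line_infinity = pline (1, 0, 0)"

definition proj_cone :: "cpt2 set set \<Rightarrow> cvec3 set set set" where
  "proj_cone A = proj_closure ` A \<union> {line_infinity}"

text \<open>Partition into classes indexed by {..<k} via cls; X a set of points of P^2.\<close>
definition is_multinet ::
  "cvec3 set set set \<Rightarrow> (cvec3 set set \<Rightarrow> nat) \<Rightarrow> nat \<Rightarrow> (cvec3 set set \<Rightarrow> nat)
     \<Rightarrow> cvec3 set set \<Rightarrow> bool" where
  "is_multinet B m k cls X =
    (k \<ge> 3 \<and>
     (\<forall>l \<in> B. cls l < k) \<and>
     (\<forall>i < k. \<exists>l \<in> B. cls l = i) \<and>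
     X \<subseteq> proj_points \<and>
     (\<exists>d. \<forall>i < k. (\<Sum>l \<in> {l \<in> B. cls l = i}. m l) = d) \<and>
     (\<forall>l \<in> B. \<forall>l' \<in> B. cls l \<noteq> cls l' \<longrightarrow> l \<inter> l' \<subseteq> X) \<and>
     (\<forall>p \<in> X. \<exists>d. \<forall>i < k. (\<Sum>l \<in> {l \<in> B. cls l = i \<and> p \<in> l}. m l) = d) \<and>
     (\<forall>i < k. \<forall>l \<in> B. \<forall>l' \<in> B. cls l = i \<longrightarrow> cls l' = i \<longrightarrow>
        (\<lambda>a b. a \<in> B \<and> b \<in> B \<and> cls a = i \<and> cls b = i \<and> a \<inter> b \<inter> X = {})\<^sup>*\<^sup>* l l'))"

definition supports_multinet :: "cvec3 set set set \<Rightarrow> bool" where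
  "supports_multinet B =
    (\<exists>m. (\<forall>l \<in> B. m l > 0) \<and> (\<exists>k cls X. is_multinet B m k cls X))"

end

theory Submission
  imports Defs
begin

lemma closure_mem:
  assumes "is_aff_line M"
  shows "ppoint (1,x,y) \<in> proj_closure M \<longleftrightarrow> (x,y) \<in> M"
proof -
  let ?f = "SOME f. aff_coeffs_ok f \<and> M = aff_line f"
  have f: "aff_coeffs_ok ?f \<and> M = aff_line ?f"
    by (rule someI_ex) (use assms in \<open>simp add: is_aff_line_def\<close>)
  obtain a b c where abc: "?f = (a,b,c)" by (cases ?f) auto
  have M: "M = {(x, y). a * x + b * y + c = 0}" using f abc by (simp add: aff_line_def)
  have pp: "ppoint (1,x,y) \<in> proj_points"
    unfolding proj_points_def by (rule CollectI, rule exI[of _ "(1,x,y)"]) simp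
  have "ppoint (1,x,y) \<in> proj_closure M \<longleftrightarrow> (\<forall>z \<in> ppoint (1,x,y). c * fst z + a * fst (snd z) + b * snd (snd z) = 0)"
    unfolding proj_closure_def abc homog_def pline_def using pp by (auto split: prod.splits)
  also have "\<dots> \<longleftrightarrow> c + a * x + b * y = 0"
  proof
    assume h: "\<forall>z \<in> ppoint (1,x,y). c * fst z + a * fst (snd z) + b * snd (snd z) = 0"
    have "(1,x,y) \<in> ppoint (1,x,y)" unfolding ppoint_def smul3_def
      by (rule CollectI, rule exI[of _ 1]) simp
    from h[rule_format, OF this] show "c + a * x + b * y = 0" by simp
  next
    assume h: "c + a * x + b * y = 0"
    show "\<forall>z \<in> ppoint (1,x,y). c * fst z + a * fst (snd z) + b * snd (snd z) = 0"
    proof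
      fix z assume "z \<in> ppoint (1,x,y)"
      then obtain t where "z = (t, t*x, t*y)" unfolding ppoint_def smul3_def by auto
      then have "c * fst z + a * fst (snd z) + b * snd (snd z) = t * (c + a * x + b * y)"
        by (simp add: algebra_simps)
      then show "c * fst z + a * fst (snd z) + b * snd (snd z) = 0" using h by simp
    qed
  qed
  also have "\<dots> \<longleftrightarrow> (x,y) \<in> M" using M by (auto simp: add.commute add.left_commute)
  finally show ?thesis .
qed

lemma not_inf: "ppoint (1,x,y) \<notin> line_infinity"
proof
  assume "ppoint (1,x,y) \<in> line_infinity"
  moreover have "(1,x,y) \<in> ppoint (1,x,y)" unfolding ppoint_def smul3_def
    by (rule CollectI, rule exI[of _ 1]) simp
  ultimately show False unfolding line_infinity_def pline_def by auto
qed

theorem theorem3p1: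
  fixes A :: "(complex \<times> complex) set set"
  assumes "finite A"
    and "\<forall>L \<in> A. is_aff_line L"
    and "dp_graph_connected A"
  shows "\<not> supports_multinet (proj_cone A)"
proof
  let ?B = "proj_cone A"
  assume "supports_multinet ?B"
  then obtain m k cls X where mpos: "\<forall>l \<in> ?B. m l > 0" and mn: "is_multinet ?B m k cls X"
    unfolding supports_multinet_def by blast
  note mnd = mn[unfolded is_multinet_def]
  have k3: "k \<ge> 3" using mnd by (elim conjE) assumption
  have clsk: "\<forall>l \<in> ?B. cls l < k" using mnd by (elim conjE) assumption
  have surj: "\<forall>i < k. \<exists>l \<in> ?B. cls l = i" using mnd by (elim conjE) assumption
  have ii: "\<forall>l \<in> ?B. \<forall>l' \<in> ?B. cls l \<noteq> cls l' \<longrightarrow> l \<inter> l' \<subseteq> X"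
    using mnd by (elim conjE) assumption
  have iii: "\<forall>p \<in> X. \<exists>d. \<forall>i < k. (\<Sum>l \<in> {l \<in> ?B. cls l = i \<and> p \<in> l}. m l) = d"
    using mnd by (elim conjE) assumption
  have finB: "finite ?B" using assms(1) unfolding proj_cone_def by simp
  have edge: "cls (proj_closure L) = cls (proj_closure L')" if e: "dp_edge A L L'" for L L'
  proof (rule ccontr)
    assume ne: "cls (proj_closure L) \<noteq> cls (proj_closure L')"
    from e have LA: "L \<in> A" "L' \<in> A" unfolding dp_edge_def by auto
    from e obtain q where q: "L \<inter> L' = {q}" "\<forall>M \<in> A - {L, L'}. q \<notin> M"
      unfolding dp_edge_def by blast
    obtain x y where qxy: "q = (x,y)" by (cases q)
    let ?P = "ppoint (1,x,y)"
    have inL: "?P \<in> proj_closure L" "?P \<in> proj_closure L'"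
      using closure_mem assms(2) LA q(1) qxy by blast+
    have BL: "proj_closure L \<in> ?B" "proj_closure L' \<in> ?B"
      using LA unfolding proj_cone_def by auto
    have PX: "?P \<in> X" using ii BL ne inL by blast
    then obtain d where d: "\<forall>i < k. (\<Sum>l \<in> {l \<in> ?B. cls l = i \<and> ?P \<in> l}. m l) = d"
      using iii by blast
    let ?i0 = "cls (proj_closure L)"
    have "m (proj_closure L) \<le> (\<Sum>l \<in> {l \<in> ?B. cls l = ?i0 \<and> ?P \<in> l}. m l)"
      by (rule member_le_sum) (use finB BL inL in auto)
    moreover have "?i0 < k" using clsk BL by blast
    ultimately have dpos: "d > 0" using d mpos BL by fastforce
    obtain j where j: "j < k" "j \<noteq> cls (proj_closure L)" "j \<noteq> cls (proj_closure L')"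
    proof -
      have "\<exists>j\<in>{0,1,2::nat}. j \<noteq> cls (proj_closure L) \<and> j \<noteq> cls (proj_closure L')" by auto
      then obtain j where "j\<in>{0,1,2::nat}" "j \<noteq> cls (proj_closure L)" "j \<noteq> cls (proj_closure L')" by blast
      moreover have "j < k" using k3 \<open>j\<in>{0,1,2::nat}\<close> by auto
      ultimately show ?thesis using that by blast
    qed
    have "(\<Sum>l \<in> {l \<in> ?B. cls l = j \<and> ?P \<in> l}. m l) > 0" using d j dpos by simp
    then have "{l \<in> ?B. cls l = j \<and> ?P \<in> l} \<noteq> {}" by (metis less_irrefl sum.empty)
    then obtain l where l: "l \<in> ?B" "cls l = j" "?P \<in> l" by blast
    have "l \<noteq> line_infinity" using l(3) not_inf by metis
    then obtain M where M: "M \<in> A" "l = proj_closure M" using l(1) unfolding proj_cone_def by auto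
    then have "(x,y) \<in> M" using closure_mem assms(2) l(3) by blast
    then have "M = L \<or> M = L'" using q(2) qxy M(1) by blast
    then show False using j l M by auto
  qed
  have conn: "cls (proj_closure L) = cls (proj_closure L')"
    if "(dp_edge A)\<^sup>*\<^sup>* L L'" for L L'
    using that
  proof (induction rule: rtranclp_induct)
    case base then show ?case by simp
  next
    case (step y z) then show ?case using edge by simp
  qed
  obtain c where c: "\<forall>l \<in> ?B. cls l \<in> {c, cls line_infinity}"
  proof (cases "A = {}")
    case True
    then show ?thesis using that[of "cls line_infinity"] unfolding proj_cone_def by auto
  next
    case False
    then obtain L0 where L0: "L0 \<in> A" by blast
    have "\<forall>l \<in> ?B. cls l \<in> {cls (proj_closure L0), cls line_infinity}"
      unfolding proj_cone_def using conn assms(3) L0 unfolding dp_graph_connected_def by auto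
    then show ?thesis using that by blast
  qed
  have "cls ` ?B \<subseteq> {c, cls line_infinity}" using c by blast
  moreover have "{0,1,2} \<subseteq> cls ` ?B"
  proof -
    have "0 < k" "1 < k" "2 < k" using k3 by auto
    then have "\<exists>l \<in> ?B. cls l = 0" "\<exists>l \<in> ?B. cls l = 1" "\<exists>l \<in> ?B. cls l = 2"
      using surj by blast+
    then show ?thesis by (metis empty_subsetI image_eqI insert_subset)
  qed
  ultimately have "{0,1,2::nat} \<subseteq> {c, cls line_infinity}" by blast
  then show False by auto
qed

end
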